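(* Let $D$ be a non-principal ultrafilter on $\omega$, $\mathbb P$ a poset, and $Q\subseteq\mathbb P$ suff-$D$-lim-linked, witnessed by $\lim^D:Q^\omega\to\mathbb P$. Then $Q$ is $D$-lim-linked, witnessed by the same function $\lim^D$. In particular, every suff-uf-lim-linked subset of a poset is uf-lim-linked.
   Context: For $Q\subseteq\mathbb P$, an ultrafilter $D$ on $\omega$ and $\lim^D:Q^\omega\to\mathbb P$, condition $(\star)_n$ says: whenever $\bar q^j=\langle q^j_m:m<\omega\rangle\in Q^\omega$ for $j<n$ and $r\in\mathbb P$ satisfies $r\leq\lim^D\bar q^j$ for all $j<n$, then $\{m<\omega: r \text{ and all } q^j_m\ (j<n)\text{ have a common extension}\}\in D$. $Q$ is suff-$D$-lim-linked if some $\lim^D:Q^\omega\to\mathbb P$ satisfies $(\star)_n$ for all $n<\omega$; suff-uf-lim-linked if this holds for every non-principal ultrafilter $D$. $Q$ is $D$-lim-linked, witnessed by $\lim^D:Q^\omega\to\mathbb P$, if there is a $\mathbb P$-name $\dot D'$ of an ultrafilter on $\omega$ extending $D$ such that for every $\bar q=\langle q_m\rangle\in Q^\omega$, $\lim^D\bar q\Vdash_{\mathbb P}\{m:q_m\in\dot G\}\in\dot D'$; uf-lim-linked if it is $D$-lim-linked for every non-principal ultrafilter $D$. *)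

theory Defs
  imports Main
begin

text \<open>A poset is a carrier set P with an order le (le r p means r is stronger than p).\<close>
definition poset :: "'a set \<Rightarrow> ('a \<Rightarrow> 'a \<Rightarrow> bool) \<Rightarrow> bool" where
  "poset P le \<longleftrightarrow> (\<forall>p\<in>P. le p p)
     \<and> (\<forall>p\<in>P. \<forall>q\<in>P. \<forall>r\<in>P. le p q \<longrightarrow> le q r \<longrightarrow> le p r)
     \<and> (\<forall>p\<in>P. \<forall>q\<in>P. le p q \<longrightarrow> le q p \<longrightarrow> p = q)"

definition nonprincipal_ultrafilter :: "nat set set \<Rightarrow> bool" where
  "nonprincipal_ultrafilter D \<longleftrightarrow> UNIV \<in> D \<and> {} \<notin> D
     \<and> (\<forall>A B. A \<in> D \<longrightarrow> A \<subseteq> B \<longrightarrow> B \<in> D)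
     \<and> (\<forall>A\<in>D. \<forall>B\<in>D. A \<inter> B \<in> D)
     \<and> (\<forall>A. A \<in> D \<or> - A \<in> D)
     \<and> (\<forall>n. {n} \<notin> D)"

definition seqs :: "'a set \<Rightarrow> (nat \<Rightarrow> 'a) set" where
  "seqs Q = {qs. \<forall>m. qs m \<in> Q}"

definition compat :: "'a set \<Rightarrow> ('a \<Rightarrow> 'a \<Rightarrow> bool) \<Rightarrow> 'a \<Rightarrow> 'a \<Rightarrow> bool" where
  "compat P le p q \<longleftrightarrow> (\<exists>r\<in>P. le r p \<and> le r q)"

definition lim_fun :: "'a set \<Rightarrow> 'a set \<Rightarrow> ((nat \<Rightarrow> 'a) \<Rightarrow> 'a) \<Rightarrow> bool" where
  "lim_fun P Q lim \<longleftrightarrow> (\<forall>qs\<in>seqs Q. lim qs \<in> P)"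

definition star_cond :: "'a set \<Rightarrow> ('a \<Rightarrow> 'a \<Rightarrow> bool) \<Rightarrow> 'a set \<Rightarrow> nat set set
    \<Rightarrow> ((nat \<Rightarrow> 'a) \<Rightarrow> 'a) \<Rightarrow> nat \<Rightarrow> bool" where
  "star_cond P le Q D lim n \<longleftrightarrow>
     (\<forall>qss :: nat \<Rightarrow> nat \<Rightarrow> 'a. (\<forall>j<n. qss j \<in> seqs Q) \<longrightarrow>
       (\<forall>r\<in>P. (\<forall>j<n. le r (lim (qss j))) \<longrightarrow>
          {m. \<exists>s\<in>P. le s r \<and> (\<forall>j<n. le s (qss j m))} \<in> D))"

definition suff_D_lim_linked_by :: "'a set \<Rightarrow> ('a \<Rightarrow> 'a \<Rightarrow> bool) \<Rightarrow> 'a set \<Rightarrow> nat set set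
    \<Rightarrow> ((nat \<Rightarrow> 'a) \<Rightarrow> 'a) \<Rightarrow> bool" where
  "suff_D_lim_linked_by P le Q D lim \<longleftrightarrow> lim_fun P Q lim \<and> (\<forall>n. star_cond P le Q D lim n)"

definition suff_uf_lim_linked :: "'a set \<Rightarrow> ('a \<Rightarrow> 'a \<Rightarrow> bool) \<Rightarrow> 'a set \<Rightarrow> bool" where
  "suff_uf_lim_linked P le Q \<longleftrightarrow>
     (\<forall>D. nonprincipal_ultrafilter D \<longrightarrow> (\<exists>lim. suff_D_lim_linked_by P le Q D lim))"

text \<open>Regular open subsets of P: these are the Boolean values [[phi]] = {p. p forces phi}.\<close>
definition reg_open :: "'a set \<Rightarrow> ('a \<Rightarrow> 'a \<Rightarrow> bool) \<Rightarrow> 'a set \<Rightarrow> bool" where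
  "reg_open P le U \<longleftrightarrow> U \<subseteq> P
     \<and> (\<forall>p\<in>U. \<forall>q\<in>P. le q p \<longrightarrow> q \<in> U)
     \<and> (\<forall>p\<in>P. (\<forall>q\<in>P. le q p \<longrightarrow> (\<exists>r\<in>P. le r q \<and> r \<in> U)) \<longrightarrow> p \<in> U)"

text \<open>A (canonical) P-name X of a subset of omega, given by X m = {p. p forces m in X}.\<close>
definition nat_name :: "'a set \<Rightarrow> ('a \<Rightarrow> 'a \<Rightarrow> bool) \<Rightarrow> (nat \<Rightarrow> 'a set) \<Rightarrow> bool" where
  "nat_name P le X \<longleftrightarrow> (\<forall>m. reg_open P le (X m))"

definition forces_subset :: "'a set \<Rightarrow> ('a \<Rightarrow> 'a \<Rightarrow> bool) \<Rightarrow> 'a \<Rightarrow> (nat \<Rightarrow> 'a set)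
    \<Rightarrow> (nat \<Rightarrow> 'a set) \<Rightarrow> bool" where
  "forces_subset P le p X Y \<longleftrightarrow> (\<forall>m. \<forall>r\<in>P. le r p \<longrightarrow> r \<in> X m \<longrightarrow> r \<in> Y m)"

definition name_inter :: "(nat \<Rightarrow> 'a set) \<Rightarrow> (nat \<Rightarrow> 'a set) \<Rightarrow> nat \<Rightarrow> 'a set" where
  "name_inter X Y = (\<lambda>m. X m \<inter> Y m)"

definition name_compl :: "'a set \<Rightarrow> ('a \<Rightarrow> 'a \<Rightarrow> bool) \<Rightarrow> (nat \<Rightarrow> 'a set) \<Rightarrow> nat \<Rightarrow> 'a set" where
  "name_compl P le X = (\<lambda>m. {p\<in>P. \<forall>r\<in>P. le r p \<longrightarrow> r \<notin> X m})"

definition check_name :: "'a set \<Rightarrow> nat set \<Rightarrow> nat \<Rightarrow> 'a set" where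
  "check_name P A = (\<lambda>m. if m \<in> A then P else {})"

text \<open>A P-name of an ultrafilter on omega extending D, given by its Boolean values:
  U X = {p. p forces X in D'} for every name X of a subset of omega.  The clauses say that
  P forces: D' is upward closed, closed under intersections, does not contain the empty set,
  contains X or omega minus X for every X, and contains every ground set of D.\<close>
definition uf_name :: "'a set \<Rightarrow> ('a \<Rightarrow> 'a \<Rightarrow> bool) \<Rightarrow> nat set set
    \<Rightarrow> ((nat \<Rightarrow> 'a set) \<Rightarrow> 'a set) \<Rightarrow> bool" where
  "uf_name P le D U \<longleftrightarrow>
     (\<forall>X. nat_name P le X \<longrightarrow> reg_open P le (U X))
   \<and> (\<forall>X Y. \<forall>p\<in>P. nat_name P le X \<longrightarrow> nat_name P le Y \<longrightarrow>
        forces_subset P le p X Y \<longrightarrow> p \<in> U X \<longrightarrow> p \<in> U Y)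
   \<and> (\<forall>X Y. \<forall>p\<in>P. nat_name P le X \<longrightarrow> nat_name P le Y \<longrightarrow>
        p \<in> U X \<longrightarrow> p \<in> U Y \<longrightarrow> p \<in> U (name_inter X Y))
   \<and> (\<forall>p\<in>P. p \<notin> U (\<lambda>m. {}))
   \<and> (\<forall>X. nat_name P le X \<longrightarrow> (\<forall>p\<in>P. \<exists>r\<in>P. le r p \<and> (r \<in> U X \<or> r \<in> U (name_compl P le X))))
   \<and> (\<forall>A\<in>D. U (check_name P A) = P)"

text \<open>The name of {m. q_m in G}: p forces q_m in G iff every extension of p is compatible with q_m.\<close>
definition G_name :: "'a set \<Rightarrow> ('a \<Rightarrow> 'a \<Rightarrow> bool) \<Rightarrow> (nat \<Rightarrow> 'a) \<Rightarrow> nat \<Rightarrow> 'a set" where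
  "G_name P le qs = (\<lambda>m. {p\<in>P. \<forall>r\<in>P. le r p \<longrightarrow> compat P le r (qs m)})"

definition D_lim_linked_by :: "'a set \<Rightarrow> ('a \<Rightarrow> 'a \<Rightarrow> bool) \<Rightarrow> 'a set \<Rightarrow> nat set set
    \<Rightarrow> ((nat \<Rightarrow> 'a) \<Rightarrow> 'a) \<Rightarrow> bool" where
  "D_lim_linked_by P le Q D lim \<longleftrightarrow> lim_fun P Q lim \<and>
     (\<exists>U. uf_name P le D U \<and> (\<forall>qs\<in>seqs Q. lim qs \<in> U (G_name P le qs)))"

definition uf_lim_linked :: "'a set \<Rightarrow> ('a \<Rightarrow> 'a \<Rightarrow> bool) \<Rightarrow> 'a set \<Rightarrow> bool" where
  "uf_lim_linked P le Q \<longleftrightarrow>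
     (\<forall>D. nonprincipal_ultrafilter D \<longrightarrow> (\<exists>lim. D_lim_linked_by P le Q D lim))"

end

theory Submission
  imports Defs
begin

definition fsub :: "'a set \<Rightarrow> ('a \<Rightarrow> 'a \<Rightarrow> bool) \<Rightarrow> 'a \<Rightarrow> ('a \<times> (nat \<Rightarrow> 'a set)) set \<Rightarrow> (nat \<Rightarrow> 'a set) \<Rightarrow> bool" where
  "fsub P le r F X \<longleftrightarrow> (\<forall>m. \<forall>s\<in>P. le s r \<longrightarrow> (\<forall>x\<in>F. s \<in> snd x m) \<longrightarrow> s \<in> X m)"

definition consis :: "'a set \<Rightarrow> ('a \<Rightarrow> 'a \<Rightarrow> bool) \<Rightarrow> ('a \<times> (nat \<Rightarrow> 'a set)) set \<Rightarrow> bool" where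
  "consis P le B \<longleftrightarrow> (\<forall>F r. finite F \<longrightarrow> F \<subseteq> B \<longrightarrow> r \<in> P \<longrightarrow> (\<forall>x\<in>F. le r (fst x))
      \<longrightarrow> (\<exists>m. \<exists>s\<in>P. le s r \<and> (\<forall>x\<in>F. s \<in> snd x m)))"

definition dcl :: "'a set \<Rightarrow> ('a \<Rightarrow> 'a \<Rightarrow> bool) \<Rightarrow> (nat \<Rightarrow> 'a set) \<Rightarrow> bool" where
  "dcl P le Y \<longleftrightarrow> (\<forall>m. \<forall>p\<in>Y m. \<forall>q\<in>P. le q p \<longrightarrow> q \<in> Y m)"

definition good :: "'a set \<Rightarrow> ('a \<Rightarrow> 'a \<Rightarrow> bool) \<Rightarrow> ('a \<times> (nat \<Rightarrow> 'a set)) set" where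
  "good P le = {x. fst x \<in> P \<and> dcl P le (snd x)}"

definition genU :: "'a set \<Rightarrow> ('a \<Rightarrow> 'a \<Rightarrow> bool) \<Rightarrow> ('a \<times> (nat \<Rightarrow> 'a set)) set \<Rightarrow> (nat \<Rightarrow> 'a set) \<Rightarrow> 'a set" where
  "genU P le B X = {p\<in>P. \<forall>q\<in>P. le q p \<longrightarrow> (\<exists>r\<in>P. le r q \<and>
      (\<exists>F. finite F \<and> F \<subseteq> B \<and> (\<forall>x\<in>F. le r (fst x)) \<and> fsub P le r F X))}"

lemma po_refl: "poset P le \<Longrightarrow> p \<in> P \<Longrightarrow> le p p"
  unfolding poset_def by blast

lemma po_trans: "poset P le \<Longrightarrow> p \<in> P \<Longrightarrow> q \<in> P \<Longrightarrow> r \<in> P \<Longrightarrow> le p q \<Longrightarrow> le q r \<Longrightarrow> le p r"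
  unfolding poset_def by blast

lemma genU_reg:
  assumes po: "poset P le"
  shows "reg_open P le (genU P le B X)"
  unfolding reg_open_def
proof (intro conjI)
  show "genU P le B X \<subseteq> P" unfolding genU_def by blast
  show "\<forall>p\<in>genU P le B X. \<forall>q\<in>P. le q p \<longrightarrow> q \<in> genU P le B X"
  proof (intro ballI impI)
    fix p q assume p: "p \<in> genU P le B X" and q: "q \<in> P" "le q p"
    have pP: "p \<in> P" using p unfolding genU_def by blast
    show "q \<in> genU P le B X"
      unfolding genU_def
    proof (intro CollectI conjI ballI impI q(1))
      fix q' assume q': "q' \<in> P" "le q' q"
      then have "le q' p" using po_trans[OF po, of q' q p] q pP by blast
      then show "\<exists>r\<in>P. le r q' \<and> (\<exists>F. finite F \<and> F \<subseteq> B \<and> (\<forall>x\<in>F. le r (fst x)) \<and> fsub P le r F X)"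
        using p q'(1) unfolding genU_def by blast
    qed
  qed
  show "\<forall>p\<in>P. (\<forall>q\<in>P. le q p \<longrightarrow> (\<exists>r\<in>P. le r q \<and> r \<in> genU P le B X)) \<longrightarrow> p \<in> genU P le B X"
  proof (intro ballI impI)
    fix p assume p: "p \<in> P" and H: "\<forall>q\<in>P. le q p \<longrightarrow> (\<exists>r\<in>P. le r q \<and> r \<in> genU P le B X)"
    show "p \<in> genU P le B X"
      unfolding genU_def
    proof (intro CollectI conjI ballI impI p)
      fix q assume q: "q \<in> P" "le q p"
      then obtain r where r: "r \<in> P" "le r q" "r \<in> genU P le B X" using H by blast
      then obtain r' where "r' \<in> P" "le r' r" "\<exists>F. finite F \<and> F \<subseteq> B \<and> (\<forall>x\<in>F. le r' (fst x)) \<and> fsub P le r' F X"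
        unfolding genU_def using po_refl[OF po] by blast
      then show "\<exists>r\<in>P. le r q \<and> (\<exists>F. finite F \<and> F \<subseteq> B \<and> (\<forall>x\<in>F. le r (fst x)) \<and> fsub P le r F X)"
        using po_trans[OF po, of r' r q] r q by blast
    qed
  qed
qed

lemma genU_mono:
  assumes po: "poset P le" and p: "p \<in> P" and fs: "forces_subset P le p X Y"
    and pin: "p \<in> genU P le B X"
  shows "p \<in> genU P le B Y"
  unfolding genU_def
proof (intro CollectI conjI ballI impI p)
  fix q assume q: "q \<in> P" "le q p"
  then obtain r F where r: "r \<in> P" "le r q" "finite F" "F \<subseteq> B" "\<forall>x\<in>F. le r (fst x)" "fsub P le r F X"
    using pin unfolding genU_def by blast
  have "fsub P le r F Y"
    unfolding fsub_def
  proof (intro allI ballI impI)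
    fix m s assume s: "s \<in> P" "le s r" "\<forall>x\<in>F. s \<in> snd x m"
    then have "s \<in> X m" using r(6) unfolding fsub_def by blast
    moreover have "le s p" using po_trans[OF po, of s r q] po_trans[OF po, of s q p] s r q p by blast
    ultimately show "s \<in> Y m" using fs s unfolding forces_subset_def by blast
  qed
  then show "\<exists>r\<in>P. le r q \<and> (\<exists>F. finite F \<and> F \<subseteq> B \<and> (\<forall>x\<in>F. le r (fst x)) \<and> fsub P le r F Y)"
    using r by blast
qed

lemma genU_int:
  assumes po: "poset P le" and Bg: "B \<subseteq> good P le"
    and pX: "p \<in> genU P le B X" and pY: "p \<in> genU P le B Y"
  shows "p \<in> genU P le B (name_inter X Y)"
proof -
  have p: "p \<in> P" using pX unfolding genU_def by blast
  show ?thesis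
    unfolding genU_def
  proof (intro CollectI conjI ballI impI p)
    fix q assume q: "q \<in> P" "le q p"
    then obtain r F1 where r: "r \<in> P" "le r q" "finite F1" "F1 \<subseteq> B" "\<forall>x\<in>F1. le r (fst x)" "fsub P le r F1 X"
      using pX unfolding genU_def by blast
    have rp: "le r p" using po_trans[OF po, of r q p] r q p by blast
    then obtain r' F2 where r': "r' \<in> P" "le r' r" "finite F2" "F2 \<subseteq> B" "\<forall>x\<in>F2. le r' (fst x)" "fsub P le r' F2 Y"
      using pY r(1) unfolding genU_def by blast
    have a1: "\<forall>x\<in>F1 \<union> F2. le r' (fst x)"
    proof
      fix x assume x: "x \<in> F1 \<union> F2"
      show "le r' (fst x)"
      proof (cases "x \<in> F2")
        case True then show ?thesis using r' by blast
      next
        case False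
        then have "x \<in> F1" using x by blast
        moreover have "fst x \<in> P" using Bg r(4) \<open>x \<in> F1\<close> unfolding good_def by blast
        ultimately show ?thesis using po_trans[OF po, of r' r "fst x"] r r' by blast
      qed
    qed
    have a2: "fsub P le r' (F1 \<union> F2) (name_inter X Y)"
      unfolding fsub_def name_inter_def
    proof (intro allI ballI impI)
      fix m s assume s: "s \<in> P" "le s r'" "\<forall>x\<in>F1 \<union> F2. s \<in> snd x m"
      have "le s r" using po_trans[OF po, of s r' r] s r r' by blast
      then have "s \<in> X m" using r(6) s unfolding fsub_def by blast
      moreover have "s \<in> Y m" using r'(6) s unfolding fsub_def by blast
      ultimately show "s \<in> X m \<inter> Y m" by blast
    qed
    have "le r' q" using po_trans[OF po, of r' r q] r r' q by blast
    moreover have "finite (F1 \<union> F2)" "F1 \<union> F2 \<subseteq> B" using r r' by auto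
    ultimately show "\<exists>r\<in>P. le r q \<and> (\<exists>F. finite F \<and> F \<subseteq> B \<and> (\<forall>x\<in>F. le r (fst x)) \<and> fsub P le r F (name_inter X Y))"
      using a1 a2 r' by blast
  qed
qed

lemma genU_empty:
  assumes po: "poset P le" and c: "consis P le B" and p: "p \<in> P"
  shows "p \<notin> genU P le B (\<lambda>m. {})"
proof
  assume "p \<in> genU P le B (\<lambda>m. {})"
  then obtain r F where r: "r \<in> P" "finite F" "F \<subseteq> B" "\<forall>x\<in>F. le r (fst x)" "fsub P le r F (\<lambda>m. {})"
    using p po_refl[OF po, of p] unfolding genU_def by blast
  then obtain m s where "s \<in> P" "le s r" "\<forall>x\<in>F. s \<in> snd x m"
    using c unfolding consis_def by blast
  then show False using r(5) unfolding fsub_def by blast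
qed

lemma genU_base:
  assumes po: "poset P le" and x: "x \<in> B" and xp: "fst x \<in> P"
  shows "fst x \<in> genU P le B (snd x)"
  unfolding genU_def
proof (intro CollectI conjI ballI impI xp)
  fix q assume q: "q \<in> P" "le q (fst x)"
  have "fsub P le q {x} (snd x)" unfolding fsub_def by blast
  then show "\<exists>r\<in>P. le r q \<and> (\<exists>F. finite F \<and> F \<subseteq> B \<and> (\<forall>x\<in>F. le r (fst x)) \<and> fsub P le r F (snd x))"
  proof (intro bexI[of _ q] conjI exI[of _ "{x}"])
    show "le q q" using po_refl[OF po] q by blast
  qed (use q x \<open>fsub P le q {x} (snd x)\<close> in auto)
qed

lemma genU_dec:
  assumes po: "poset P le" and Mg: "M \<subseteq> good P le" and c: "consis P le M"
    and mx: "\<And>M'. M \<subseteq> M' \<Longrightarrow> M' \<subseteq> good P le \<Longrightarrow> consis P le M' \<Longrightarrow> M' = M"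
    and X: "nat_name P le X" and p: "p \<in> P"
  shows "\<exists>r\<in>P. le r p \<and> (r \<in> genU P le M X \<or> r \<in> genU P le M (name_compl P le X))"
proof (cases "consis P le (insert (p, X) M)")
  case True
  have "dcl P le X" using X unfolding nat_name_def reg_open_def dcl_def by blast
  then have "insert (p, X) M \<subseteq> good P le" using Mg p unfolding good_def by auto
  then have "insert (p, X) M = M" using mx True by blast
  then have "(p, X) \<in> M" by blast
  then have "p \<in> genU P le M X" using genU_base[OF po, of "(p,X)" M] p by simp
  then show ?thesis using p po_refl[OF po, of p] by blast
next
  case False
  then obtain F r where F: "finite F" "F \<subseteq> insert (p, X) M" "r \<in> P" "\<forall>x\<in>F. le r (fst x)"
    and no: "\<not> (\<exists>m. \<exists>s\<in>P. le s r \<and> (\<forall>x\<in>F. s \<in> snd x m))"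
    unfolding consis_def by blast
  have pF: "(p, X) \<in> F"
  proof (rule ccontr)
    assume "(p, X) \<notin> F"
    then have "F \<subseteq> M" using F by blast
    then show False using c F no unfolding consis_def by blast
  qed
  then have rp: "le r p" using F by fastforce
  define F0 where "F0 = F - {(p, X)}"
  have F0: "finite F0" "F0 \<subseteq> M" using F unfolding F0_def by auto
  have "r \<in> genU P le M (name_compl P le X)"
    unfolding genU_def
  proof (intro CollectI conjI ballI impI F(3))
    fix q assume q: "q \<in> P" "le q r"
    have a1: "\<forall>x\<in>F0. le q (fst x)"
    proof
      fix x assume x: "x \<in> F0"
      then have "fst x \<in> P" using F0 Mg unfolding good_def by blast
      then show "le q (fst x)" using po_trans[OF po, of q r "fst x"] q F x unfolding F0_def by blast
    qed
    have a2: "fsub P le q F0 (name_compl P le X)"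
      unfolding fsub_def name_compl_def
    proof (intro allI ballI impI CollectI conjI)
      fix m s assume s: "s \<in> P" "le s q" "\<forall>x\<in>F0. s \<in> snd x m"
      show "s \<in> P" by (rule s(1))
    next
      fix m s t assume s: "s \<in> P" "le s q" "\<forall>x\<in>F0. s \<in> snd x m"
        and t: "t \<in> P" "le t s"
      show "t \<notin> X m"
      proof
        assume tX: "t \<in> X m"
        have tr: "le t r" using po_trans[OF po, of t s q] po_trans[OF po, of t q r] t s q F(3) by blast
        have "\<forall>x\<in>F. t \<in> snd x m"
        proof
          fix x assume x: "x \<in> F"
          show "t \<in> snd x m"
          proof (cases "x = (p, X)")
            case True then show ?thesis using tX by simp
          next
            case False
            then have "x \<in> F0" using x unfolding F0_def by blast
            then have "s \<in> snd x m" "dcl P le (snd x)" using s F0 Mg unfolding good_def by auto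
            then show ?thesis using t unfolding dcl_def by blast
          qed
        qed
        then show False using no t tr by blast
      qed
    qed
    show "\<exists>r\<in>P. le r q \<and> (\<exists>F. finite F \<and> F \<subseteq> M \<and> (\<forall>x\<in>F. le r (fst x)) \<and> fsub P le r F (name_compl P le X))"
      using q a1 a2 F0 po_refl[OF po, of q] by blast
  qed
  then show ?thesis using F(3) rp by blast
qed

lemma finite_inter_D:
  assumes D: "nonprincipal_ultrafilter D" and K: "finite K" "K \<subseteq> D" and S: "S \<in> D"
  shows "\<Inter>K \<inter> S \<in> D"
  using K
proof (induction K rule: finite_induct)
  case empty then show ?case using S by simp
next
  case (insert A K)
  then have "A \<in> D" "\<Inter>K \<inter> S \<in> D" by auto
  then have "A \<inter> (\<Inter>K \<inter> S) \<in> D" using D unfolding nonprincipal_ultrafilter_def by blast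
  then show ?case by (simp add: Int_assoc)
qed

lemma consis_B0:
  assumes po: "poset P le" and QP: "Q \<subseteq> P" and D: "nonprincipal_ultrafilter D"
    and sl: "suff_D_lim_linked_by P le Q D lim"
  shows "consis P le ({(p, check_name P A) | p A. p \<in> P \<and> A \<in> D}
            \<union> {(lim qs, G_name P le qs) | qs. qs \<in> seqs Q})"
  unfolding consis_def
proof (intro allI impI)
  fix F r
  let ?C = "{(p, check_name P A) | p A. p \<in> P \<and> A \<in> D}"
  let ?G = "{(lim qs, G_name P le qs) | qs. qs \<in> seqs Q}"
  assume F: "finite F" "F \<subseteq> ?C \<union> ?G" and r: "r \<in> P" and rF: "\<forall>x\<in>F. le r (fst x)"
  define Gs where "Gs = ?G"
  define FG where "FG = F \<inter> Gs"
  define FC where "FC = F - Gs"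
  define g where "g x = (SOME qs. qs \<in> seqs Q \<and> x = (lim qs, G_name P le qs))" for x :: "'a \<times> (nat \<Rightarrow> 'a set)"
  define a where "a x = (SOME A. A \<in> D \<and> (\<exists>p. x = (p, check_name P A)))" for x :: "'a \<times> (nat \<Rightarrow> 'a set)"
  have gx: "g x \<in> seqs Q \<and> x = (lim (g x), G_name P le (g x))" if "x \<in> FG" for x
  proof -
    have "\<exists>qs. qs \<in> seqs Q \<and> x = (lim qs, G_name P le qs)" using that unfolding FG_def Gs_def by blast
    then show ?thesis unfolding g_def by (rule someI_ex)
  qed
  have ax: "a x \<in> D \<and> (\<exists>p. x = (p, check_name P (a x)))" if "x \<in> FC" for x
  proof -
    have "\<exists>A. A \<in> D \<and> (\<exists>p. x = (p, check_name P A))" using that F unfolding FC_def Gs_def by blast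
    then show ?thesis unfolding a_def by (rule someI_ex)
  qed
  have "finite FG" using F(1) unfolding FG_def by simp
  then obtain h where h: "bij_betw h {0..<card FG} FG" using ex_bij_betw_nat_finite by blast
  define n where "n = card FG"
  define qss where "qss j = g (h j)" for j
  have hj: "h j \<in> FG" if "j < n" for j using h that unfolding n_def bij_betw_def by auto
  have sc: "star_cond P le Q D lim n" using sl unfolding suff_D_lim_linked_by_def by blast
  have qssQ: "\<forall>j<n. qss j \<in> seqs Q" using hj gx unfolding qss_def by blast
  have rl: "\<forall>j<n. le r (lim (qss j))"
  proof (intro allI impI)
    fix j assume "j < n"
    then have hx: "h j \<in> FG" by (rule hj)
    have e: "h j = (lim (qss j), G_name P le (qss j))"
      unfolding qss_def using gx[OF hx] by (rule conjunct2)
    have f1: "fst (h j) = lim (qss j)" using arg_cong[where f=fst, OF e] by simp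
    have "h j \<in> F" using hx unfolding FG_def by (rule IntD1)
    then have "le r (fst (h j))" by (rule bspec[OF rF])
    then show "le r (lim (qss j))" unfolding f1 .
  qed
  define S where "S = {m. \<exists>s\<in>P. le s r \<and> (\<forall>j<n. le s (qss j m))}"
  have sc': "\<forall>r\<in>P. (\<forall>j<n. le r (lim (qss j))) \<longrightarrow> {m. \<exists>s\<in>P. le s r \<and> (\<forall>j<n. le s (qss j m))} \<in> D"
    by (rule mp[OF spec[OF sc[unfolded star_cond_def], of qss] qssQ])
  have SD: "S \<in> D" unfolding S_def by (rule mp[OF bspec[OF sc' r] rl])
  have fa: "finite (a ` FC)" using F(1) unfolding FC_def by simp
  have aD: "a ` FC \<subseteq> D" using conjunct1[OF ax] by blast
  have TD: "\<Inter>(a ` FC) \<inter> S \<in> D" using finite_inter_D[OF D fa aD SD] .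
  have "{} \<notin> D" using D unfolding nonprincipal_ultrafilter_def by blast
  then have "\<Inter>(a ` FC) \<inter> S \<noteq> {}" using TD by auto
  then obtain m where m: "m \<in> \<Inter>(a ` FC)" "m \<in> S" by blast
  then obtain s where s: "s \<in> P" "le s r" "\<forall>j<n. le s (qss j m)" unfolding S_def by blast
  have "\<forall>x\<in>F. s \<in> snd x m"
  proof
    fix x assume x: "x \<in> F"
    show "s \<in> snd x m"
    proof (cases "x \<in> FG")
      case False
      then have xc: "x \<in> FC" using x unfolding FG_def FC_def by blast
      from conjunct2[OF ax[OF xc]] obtain p where xp: "x = (p, check_name P (a x))" ..
      have sx: "snd x = check_name P (a x)" using arg_cong[where f=snd, OF xp] by simp
      have "m \<in> a x" using m xc by blast
      then show ?thesis using s(1) unfolding sx check_name_def by simp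
    next
      case True
      have "x \<in> h ` {0..<n}" using h True unfolding n_def bij_betw_def by simp
      then obtain j where j0: "j \<in> {0..<n}" "x = h j" by blast
      then have j: "j < n" by simp
      have "snd x = G_name P le (g x)" using arg_cong[where f=snd, OF conjunct2[OF gx[OF True]]] by simp
      then have xe: "snd x = G_name P le (qss j)" unfolding qss_def using j0(2) by simp
      have qm: "qss j m \<in> P" using qssQ j QP unfolding seqs_def by blast
      have "s \<in> G_name P le (qss j) m"
        unfolding G_name_def compat_def
      proof (intro CollectI conjI s(1) ballI impI)
        fix t assume t: "t \<in> P" "le t s"
        have "le t (qss j m)" using po_trans[OF po, of t s "qss j m"] t s j qm by blast
        then show "\<exists>u\<in>P. le u t \<and> le u (qss j m)" using t po_refl[OF po, of t] by blast
      qed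
      then show ?thesis using xe by simp
    qed
  qed
  then show "\<exists>m. \<exists>s\<in>P. le s r \<and> (\<forall>x\<in>F. s \<in> snd x m)" using s by blast
qed

lemma main_part:
  assumes po: "poset P le" and QP: "Q \<subseteq> P" and D: "nonprincipal_ultrafilter D"
    and sl: "suff_D_lim_linked_by P le Q D lim"
  shows "D_lim_linked_by P le Q D lim"
proof -
  define B0 where "B0 = {(p, check_name P A) | p A. p \<in> P \<and> A \<in> D}
            \<union> {(lim qs, G_name P le qs) | qs. qs \<in> seqs Q}"
  have lf: "lim_fun P Q lim" using sl unfolding suff_D_lim_linked_by_def by blast
  have c0: "consis P le B0" using consis_B0[OF po QP D sl] unfolding B0_def .
  have dG: "dcl P le (G_name P le qs)" if "qs \<in> seqs Q" for qs
    unfolding dcl_def G_name_def using po_trans[OF po] by blast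
  have g0: "B0 \<subseteq> good P le"
    using lf dG unfolding B0_def good_def lim_fun_def dcl_def check_name_def by (auto split: if_splits)
  define AA where "AA = {B. B0 \<subseteq> B \<and> B \<subseteq> good P le \<and> consis P le B}"
  have "\<exists>M\<in>AA. \<forall>X\<in>AA. M \<subseteq> X \<longrightarrow> X = M"
  proof (rule subset_Zorn_nonempty)
    show "AA \<noteq> {}" using c0 g0 unfolding AA_def by blast
  next
    fix CC assume ne: "CC \<noteq> {}" and ch: "subset.chain AA CC"
    have sub: "CC \<subseteq> AA" using ch by (simp add: subset.chain_def)
    have "B0 \<subseteq> \<Union>CC" using ne sub unfolding AA_def by blast
    moreover have "\<Union>CC \<subseteq> good P le" using sub unfolding AA_def by blast
    moreover have "consis P le (\<Union>CC)"
      unfolding consis_def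
    proof (intro allI impI)
      fix F r assume F: "finite F" "F \<subseteq> \<Union>CC" "r \<in> P" "\<forall>x\<in>F. le r (fst x)"
      obtain B where "B \<in> CC" "F \<subseteq> B" using finite_subset_Union_chain[OF F(1) F(2) ne ch] by blast
      then have "consis P le B" using sub unfolding AA_def by blast
      then show "\<exists>m. \<exists>s\<in>P. le s r \<and> (\<forall>x\<in>F. s \<in> snd x m)"
        using F \<open>F \<subseteq> B\<close> unfolding consis_def by blast
    qed
    ultimately show "\<Union>CC \<in> AA" unfolding AA_def by blast
  qed
  then obtain M where M: "B0 \<subseteq> M" "M \<subseteq> good P le" "consis P le M"
    and mx0: "\<forall>X\<in>AA. M \<subseteq> X \<longrightarrow> X = M" unfolding AA_def by blast
  have mx: "M' = M" if "M \<subseteq> M'" "M' \<subseteq> good P le" "consis P le M'" for M'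
    using mx0 that M(1) unfolding AA_def by blast
  define U where "U = genU P le M"
  have "uf_name P le D U"
    unfolding uf_name_def
  proof (intro conjI allI impI ballI)
    fix X show "reg_open P le (U X)" unfolding U_def by (rule genU_reg[OF po])
  next
    fix X Y p assume "p \<in> P" "forces_subset P le p X Y" "p \<in> U X"
    then show "p \<in> U Y" unfolding U_def using genU_mono[OF po] by blast
  next
    fix X Y p assume "p \<in> U X" "p \<in> U Y"
    then show "p \<in> U (name_inter X Y)" unfolding U_def using genU_int[OF po M(2)] by blast
  next
    fix p assume "p \<in> P" then show "p \<notin> U (\<lambda>m. {})" unfolding U_def using genU_empty[OF po M(3)] by blast
  next
    fix X p assume "nat_name P le X" "p \<in> P"
    then show "\<exists>r\<in>P. le r p \<and> (r \<in> U X \<or> r \<in> U (name_compl P le X))"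
      unfolding U_def using genU_dec[OF po M(2) M(3) mx] by blast
  next
    fix A assume A: "A \<in> D"
    show "U (check_name P A) = P"
    proof
      show "U (check_name P A) \<subseteq> P" unfolding U_def genU_def by blast
      show "P \<subseteq> U (check_name P A)"
      proof
        fix p assume p: "p \<in> P"
        then have "(p, check_name P A) \<in> M" using M(1) A unfolding B0_def by blast
        then show "p \<in> U (check_name P A)" using genU_base[OF po, of "(p, check_name P A)" M] p
          unfolding U_def by simp
      qed
    qed
  qed
  moreover have "\<forall>qs\<in>seqs Q. lim qs \<in> U (G_name P le qs)"
  proof
    fix qs assume qs: "qs \<in> seqs Q"
    then have "(lim qs, G_name P le qs) \<in> M" using M(1) unfolding B0_def by blast
    moreover have "lim qs \<in> P" using lf qs unfolding lim_fun_def by blast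
    ultimately show "lim qs \<in> U (G_name P le qs)"
      using genU_base[OF po, of "(lim qs, G_name P le qs)" M] unfolding U_def by simp
  qed
  ultimately show ?thesis using lf unfolding D_lim_linked_by_def by blast
qed

theorem lemma3p27:
  fixes P Q :: "'a set" and le :: "'a \<Rightarrow> 'a \<Rightarrow> bool"
    and D :: "nat set set" and lim :: "(nat \<Rightarrow> 'a) \<Rightarrow> 'a"
  assumes "poset P le" and "Q \<subseteq> P"
    and "nonprincipal_ultrafilter D"
    and "suff_D_lim_linked_by P le Q D lim"
  shows "D_lim_linked_by P le Q D lim \<and> (suff_uf_lim_linked P le Q \<longrightarrow> uf_lim_linked P le Q)"
proof
  show "D_lim_linked_by P le Q D lim" using main_part assms by blast
  show "suff_uf_lim_linked P le Q \<longrightarrow> uf_lim_linked P le Q"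
    unfolding suff_uf_lim_linked_def uf_lim_linked_def
    using main_part[OF assms(1,2)] by blast
qed

end
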